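(* Let $(X,d)$ be a compact metric space and $f\colon X\to X$ an equicontinuous map. The following are equivalent: (1) $f$ has the limit shadowing property; (2) $f$ has the shadowing property; (3) $\dim\Omega(f)=0$, equivalently $\Omega(f)$ is totally disconnected.
   Context: $f$ is equicontinuous if for every $\epsilon>0$ there is $\delta>0$ such that $d(x,y)\le\delta$ implies $\sup_{n\ge0}d(f^n(x),f^n(y))\le\epsilon$. A $\delta$-pseudo orbit is a sequence $(x_i)_{i\ge0}$ with $d(f(x_i),x_{i+1})\le\delta$ for all $i$; it is $\epsilon$-shadowed by $x$ if $d(x_i,f^i(x))\le\epsilon$ for all $i$. $f$ has the shadowing property if for every $\epsilon>0$ there is $\delta>0$ such that every $\delta$-pseudo orbit is $\epsilon$-shadowed by some point. $f$ has the limit shadowing property if for every sequence $(x_i)_{i\ge0}$ with $\lim_{i}d(f(x_i),x_{i+1})=0$ there is $y\in X$ with $\lim_i d(x_i,f^i(y))=0$. $\Omega(f)$ is the set of non-wandering points: $x$ such that for every neighborhood $U$ of $x$ there is $n>0$ with $f^n(U)\cap U\ne\emptyset$. *)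

theory Defs
  imports "HOL-Analysis.Analysis"
begin

definition equicontinuous_on :: "'a::metric_space set \<Rightarrow> ('a \<Rightarrow> 'a) \<Rightarrow> bool" where
  "equicontinuous_on X f \<longleftrightarrow>
     (\<forall>\<epsilon>>0. \<exists>\<delta>>0. \<forall>x\<in>X. \<forall>y\<in>X. dist x y \<le> \<delta> \<longrightarrow>
        (\<forall>n. dist ((f ^^ n) x) ((f ^^ n) y) \<le> \<epsilon>))"

definition pseudo_orbit :: "'a::metric_space set \<Rightarrow> ('a \<Rightarrow> 'a) \<Rightarrow> real \<Rightarrow> (nat \<Rightarrow> 'a) \<Rightarrow> bool" where
  "pseudo_orbit X f \<delta> xs \<longleftrightarrow> (\<forall>i. xs i \<in> X) \<and> (\<forall>i. dist (f (xs i)) (xs (Suc i)) \<le> \<delta>)"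

definition shadows :: "('a::metric_space \<Rightarrow> 'a) \<Rightarrow> real \<Rightarrow> (nat \<Rightarrow> 'a) \<Rightarrow> 'a \<Rightarrow> bool" where
  "shadows f \<epsilon> xs x \<longleftrightarrow> (\<forall>i. dist (xs i) ((f ^^ i) x) \<le> \<epsilon>)"

definition shadowing :: "'a::metric_space set \<Rightarrow> ('a \<Rightarrow> 'a) \<Rightarrow> bool" where
  "shadowing X f \<longleftrightarrow>
     (\<forall>\<epsilon>>0. \<exists>\<delta>>0. \<forall>xs. pseudo_orbit X f \<delta> xs \<longrightarrow> (\<exists>x\<in>X. shadows f \<epsilon> xs x))"

definition limit_shadowing :: "'a::metric_space set \<Rightarrow> ('a \<Rightarrow> 'a) \<Rightarrow> bool" where
  "limit_shadowing X f \<longleftrightarrow>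
     (\<forall>xs. (\<forall>i. xs i \<in> X) \<and> (\<lambda>i. dist (f (xs i)) (xs (Suc i))) \<longlonglongrightarrow> 0 \<longrightarrow>
        (\<exists>y\<in>X. (\<lambda>i. dist (xs i) ((f ^^ i) y)) \<longlonglongrightarrow> 0))"

text \<open>Non-wandering set; neighbourhoods are taken in the subspace topology of X.\<close>
definition nonwandering :: "'a::metric_space set \<Rightarrow> ('a \<Rightarrow> 'a) \<Rightarrow> 'a set" where
  "nonwandering X f = {x\<in>X. \<forall>U. open U \<and> x \<in> U \<longrightarrow>
       (\<exists>n>0. \<exists>y\<in>X \<inter> U. (f ^^ n) y \<in> U)}"

text \<open>Small inductive dimension at most 0: a base of relatively clopen sets.\<close>
definition zero_dimensional :: "'a::metric_space set \<Rightarrow> bool" where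
  "zero_dimensional S \<longleftrightarrow>
     (\<forall>x\<in>S. \<forall>U. open U \<and> x \<in> U \<longrightarrow>
        (\<exists>V. openin (top_of_set S) V \<and> closedin (top_of_set S) V \<and> x \<in> V \<and> V \<subseteq> U))"

definition totally_disconnected :: "'a::topological_space set \<Rightarrow> bool" where
  "totally_disconnected S \<longleftrightarrow> (\<forall>C. C \<subseteq> S \<and> connected C \<longrightarrow> (\<exists>a. C \<subseteq> {a}))"

end

theory Submission
  imports Defs
begin


definition Dle :: "('a::metric_space \<Rightarrow> 'a) \<Rightarrow> real \<Rightarrow> 'a \<Rightarrow> 'a \<Rightarrow> bool" where
  "Dle f g a b \<longleftrightarrow> (\<forall>n. dist ((f^^n) a) ((f^^n) b) \<le> g)"

locale eqc =
  fixes X :: "'a::metric_space set" and f :: "'a \<Rightarrow> 'a"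
  assumes cX: "compact X" and fX: "f ` X \<subseteq> X" and eqX: "equicontinuous_on X f"
begin

abbreviation "Om \<equiv> nonwandering X f"

lemma fn_in: "x \<in> X \<Longrightarrow> (f^^n) x \<in> X"
  by (induction n) (use fX in auto)

lemma L1: assumes "e > 0" obtains d where "d > 0"
  "\<And>x y n. x \<in> X \<Longrightarrow> y \<in> X \<Longrightarrow> dist x y \<le> d \<Longrightarrow> dist ((f^^n) x) ((f^^n) y) \<le> e"
  using eqX assms unfolding equicontinuous_on_def by meson

lemma L1D: assumes "e > 0" obtains d where "d > 0"
  "\<And>x y. x \<in> X \<Longrightarrow> y \<in> X \<Longrightarrow> dist x y \<le> d \<Longrightarrow> Dle f e x y"
  using L1[OF assms] unfolding Dle_def by metis

lemma Dle_f: "Dle f e a b \<Longrightarrow> Dle f e (f a) (f b)"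
  unfolding Dle_def by (metis funpow_Suc_right o_apply)

lemma Dle_fn: "Dle f e a b \<Longrightarrow> Dle f e ((f^^k) a) ((f^^k) b)"
  unfolding Dle_def by (metis funpow_add o_apply)

lemma Dle_dist: "Dle f e a b \<Longrightarrow> dist a b \<le> e"
  unfolding Dle_def by (metis funpow_0)

lemma Dle_sym: "Dle f e a b \<Longrightarrow> Dle f e b a"
  unfolding Dle_def by (simp add: dist_commute)

lemma Dle_mono: "Dle f e a b \<Longrightarrow> e \<le> e' \<Longrightarrow> Dle f e' a b"
  unfolding Dle_def by (meson order_trans)

lemma cont_fn: "continuous_on X (f^^n)"
  unfolding continuous_on_iff
proof (intro ballI allI impI)
  fix x e assume x: "x \<in> X" and e: "(0::real) < e"
  obtain d where d: "d > 0" "\<And>x y n. x \<in> X \<Longrightarrow> y \<in> X \<Longrightarrow> dist x y \<le> d \<Longrightarrow> dist ((f^^n) x) ((f^^n) y) \<le> e/2"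
    using L1[of "e/2"] e by auto
  show "\<exists>d>0. \<forall>x'\<in>X. dist x' x < d \<longrightarrow> dist ((f ^^ n) x') ((f ^^ n) x) < e"
  proof (intro exI[of _ d] conjI ballI impI)
    fix x' assume "x' \<in> X" "dist x' x < d"
    then have "dist ((f ^^ n) x') ((f ^^ n) x) \<le> e/2" using d(2)[of x' x n] x by simp
    then show "dist ((f ^^ n) x') ((f ^^ n) x) < e" using e by simp
  qed (use d in auto)
qed

lemma closedX: "closed X" using cX compact_imp_closed by blast

lemma Om_sub: "Om \<subseteq> X" unfolding nonwandering_def by auto

lemma Om_closed: "closed Om"
proof -
  have "x \<in> Om" if "x islimpt Om" for x
  proof -
    have "x islimpt X" using islimpt_subset[OF that Om_sub] .
    then have xX: "x \<in> X" using closedX unfolding closed_limpt by blast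
    have "\<exists>n>0. \<exists>y\<in>X \<inter> U. (f ^^ n) y \<in> U" if U: "open U" "x \<in> U" for U
    proof -
      obtain z where "z \<in> Om" "z \<in> U" using islimptE[OF \<open>x islimpt Om\<close> U(2) U(1)] by blast
      then have "\<forall>U. open U \<and> z \<in> U \<longrightarrow> (\<exists>n>0. \<exists>y\<in>X \<inter> U. (f ^^ n) y \<in> U)"
        unfolding nonwandering_def by simp
      then show ?thesis using U \<open>z \<in> U\<close> by simp
    qed
    then show ?thesis using xX unfolding nonwandering_def by simp
  qed
  then show ?thesis unfolding closed_limpt by blast
qed

lemma Om_compact: "compact Om"
  using compact_Int_closed[OF cX Om_closed] Om_sub by (simp add: Int_absorb1)

lemma rec_Om: assumes "x \<in> X" "\<And>e. e > 0 \<Longrightarrow> \<exists>n>0. dist ((f^^n) x) x < e" shows "x \<in> Om"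
proof -
  have "\<exists>n>0. \<exists>y\<in>X \<inter> U. (f ^^ n) y \<in> U" if U: "open U" "x \<in> U" for U
  proof -
    obtain e where "e > 0" "ball x e \<subseteq> U" using U open_contains_ball by blast
    then obtain n where "n > 0" "dist ((f^^n) x) x < e" using assms(2) by blast
    then show ?thesis using assms(1) \<open>ball x e \<subseteq> U\<close> U
      by (intro exI[of _ n]) (auto simp: dist_commute)
  qed
  then show ?thesis using assms unfolding nonwandering_def by blast
qed

lemma Rec1: assumes "x \<in> Om" "e > 0" shows "\<exists>n>0. dist ((f^^n) x) x < e"
proof -
  obtain d where d: "d > 0" "\<And>x y n. x \<in> X \<Longrightarrow> y \<in> X \<Longrightarrow> dist x y \<le> d \<Longrightarrow> dist ((f^^n) x) ((f^^n) y) \<le> e/2"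
    using L1[of "e/2"] assms by auto
  define r where "r = min d (e/2)"
  have r: "r > 0" using d assms unfolding r_def by auto
  have "open (ball x r)" "x \<in> ball x r" using r by auto
  then have "\<exists>n>0. \<exists>y\<in>X \<inter> ball x r. (f ^^ n) y \<in> ball x r"
    using assms(1) unfolding nonwandering_def by blast
  then obtain n y where n: "n > 0" "y \<in> X" "y \<in> ball x r" "(f^^n) y \<in> ball x r" by blast
  have xX: "x \<in> X" using assms Om_sub by auto
  have "dist ((f^^n) x) ((f^^n) y) \<le> e/2" using d(2)[OF xX n(2)] n(3) unfolding r_def by (simp add: dist_commute)
  moreover have "dist ((f^^n) y) x < e/2" using n(4) unfolding r_def by (simp add: dist_commute)
  ultimately have "dist ((f^^n) x) x < e" using dist_triangle[of "(f^^n) x" x "(f^^n) y"] dist_triangle[of "(f^^n) x" "(f^^n) y" x] by linarith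
  then show ?thesis using n(1) by blast
qed

lemma RecN: assumes "x \<in> Om" "e > 0" shows "\<exists>n\<ge>N. dist ((f^^n) x) x < e"
proof -
  define r where "r = e / (N+2)"
  have r: "r > 0" using assms unfolding r_def by auto
  obtain d where d: "d > 0" "\<And>x y n. x \<in> X \<Longrightarrow> y \<in> X \<Longrightarrow> dist x y \<le> d \<Longrightarrow> dist ((f^^n) x) ((f^^n) y) \<le> r"
    using L1[OF r] by auto
  obtain n where n: "n > 0" "dist ((f^^n) x) x < d" using Rec1[OF assms(1) d(1)] by auto
  have xX: "x \<in> X" using assms Om_sub by auto
  have k: "dist ((f^^(k*n)) x) x \<le> k * r" for k
  proof (induction k)
    case 0 then show ?case by simp
  next
    case (Suc k)
    have eq: "(f^^(Suc k * n)) x = (f^^(k*n)) ((f^^n) x)" by (simp only: mult_Suc add.commute[of n] funpow_add o_apply)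
    have "dist ((f^^(k*n)) ((f^^n) x)) ((f^^(k*n)) x) \<le> r" using d(2)[OF fn_in[OF xX] xX] n by simp
    then show ?case using Suc eq dist_triangle[of "(f^^(Suc k * n)) x" x "(f^^(k*n)) x"]
      by (simp add: algebra_simps)
  qed
  have "dist ((f^^((N+1)*n)) x) x \<le> (N+1) * r" using k[of "N+1"] by simp
  also have "\<dots> < e" using assms r unfolding r_def by (simp add: field_simps)
  finally have "dist ((f^^((N+1)*n)) x) x < e" .
  moreover have "(N+1)*1 \<le> (N+1)*n" using n(1) by (intro mult_le_mono2) simp
  ultimately show ?thesis by (intro exI[of _ "(N+1)*n"]) auto
qed

lemma Xinf: assumes "x \<in> Om" shows "x \<in> (f^^N) ` X"
proof -
  have cl: "closed ((f^^N) ` X)" using compact_continuous_image[OF cont_fn cX] compact_imp_closed by blast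
  have "\<exists>y\<in>(f^^N) ` X. dist y x < e" if e: "e > 0" for e
  proof -
    obtain n where n: "n \<ge> N" "dist ((f^^n) x) x < e" using RecN[OF assms e] by blast
    have "(f^^n) x = (f^^(N + (n-N))) x" using n(1) by simp
    also have "\<dots> = (f^^N) ((f^^(n-N)) x)" by (simp only: funpow_add o_apply)
    finally have eq: "(f^^n) x = (f^^N) ((f^^(n-N)) x)" .
    have "(f^^(n-N)) x \<in> X" using fn_in assms Om_sub by blast
    then have "(f^^n) x \<in> (f^^N) ` X" using eq by simp
    then show ?thesis using n(2) by blast
  qed
  then show ?thesis using closed_approachable[OF cl] by blast
qed

lemma Om_f: assumes "x \<in> Om" shows "f x \<in> Om"
proof (rule rec_Om)
  have xX: "x \<in> X" using assms Om_sub by auto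
  then show "f x \<in> X" using fX by auto
  fix e :: real assume "e > 0"
  obtain d where d: "d > 0" "\<And>x y n. x \<in> X \<Longrightarrow> y \<in> X \<Longrightarrow> dist x y \<le> d \<Longrightarrow> dist ((f^^n) x) ((f^^n) y) \<le> e/2"
    using L1[of "e/2"] \<open>e>0\<close> by auto
  obtain n where n: "n > 0" "dist ((f^^n) x) x < d" using Rec1[OF assms d(1)] by auto
  have "dist ((f^^1) ((f^^n) x)) ((f^^1) x) \<le> e/2" using d(2)[of "(f^^n) x" x 1] fn_in[OF xX] xX n by simp
  then have "dist ((f^^n) (f x)) (f x) \<le> e/2" by (simp add: funpow_swap1)
  then show "\<exists>n>0. dist ((f ^^ n) (f x)) (f x) < e" using n(1) \<open>e>0\<close> by (intro exI[of _ n]) auto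
qed

end


context eqc begin

lemma JR: assumes "x \<in> Om" "y \<in> Om" "e > 0"
  shows "\<exists>n\<ge>N. dist ((f^^n) x) x < e \<and> dist ((f^^n) y) y < e"
proof -
  have "\<forall>k. \<exists>w. w \<in> X \<and> (f^^k) w = x"
  proof
    fix k
    from Xinf[OF assms(1), of k] obtain w where "w \<in> X" "x = (f^^k) w" by (rule imageE)
    then show "\<exists>w. w \<in> X \<and> (f^^k) w = x" by blast
  qed
  from choice[OF this] obtain u where u0: "\<forall>k. u k \<in> X \<and> (f^^k) (u k) = x" by blast
  have u: "\<And>k. u k \<in> X" "\<And>k. (f^^k) (u k) = x" using u0 by auto
  have "\<forall>k. \<exists>w. w \<in> X \<and> (f^^k) w = y"
  proof
    fix k
    from Xinf[OF assms(2), of k] obtain w where "w \<in> X" "y = (f^^k) w" by (rule imageE)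
    then show "\<exists>w. w \<in> X \<and> (f^^k) w = y" by blast
  qed
  from choice[OF this] obtain v where v0: "\<forall>k. v k \<in> X \<and> (f^^k) (v k) = y" by blast
  have v: "\<And>k. v k \<in> X" "\<And>k. (f^^k) (v k) = y" using v0 by auto
  define g where "g k = (u k, v k)" for k
  have sc: "seq_compact (X \<times> X)" using compact_Times[OF cX cX] compact_imp_seq_compact by blast
  have gin: "\<forall>k. g k \<in> X \<times> X" using u v unfolding g_def by auto
  obtain l r where r: "strict_mono r" "(g \<circ> r) \<longlonglongrightarrow> l" using seq_compactE[OF sc gin] by blast
  obtain d where d: "d > 0" "\<And>x y n. x \<in> X \<Longrightarrow> y \<in> X \<Longrightarrow> dist x y \<le> d \<Longrightarrow> dist ((f^^n) x) ((f^^n) y) \<le> e/2"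
    using L1[of "e/2"] assms by auto
  have "Cauchy (g \<circ> r)" using r(2) LIMSEQ_imp_Cauchy by blast
  then obtain M where M: "\<And>i j. i \<ge> M \<Longrightarrow> j \<ge> M \<Longrightarrow> dist ((g \<circ> r) i) ((g \<circ> r) j) < d"
    using d(1) unfolding Cauchy_def by meson
  define i where "i = M"
  define j where "j = r M + N + 1"
  have ij: "i \<ge> M" "j \<ge> M" using seq_suble[OF r(1), of M] unfolding i_def j_def by auto
  have rj: "r j \<ge> j" using seq_suble[OF r(1)] by blast
  have "r j > r i + N" using rj unfolding i_def j_def by simp
  define n where "n = r j - r i"
  have n: "n \<ge> N" "n + r i = r j" using \<open>r j > r i + N\<close> unfolding n_def by auto
  have gd: "dist (g (r i)) (g (r j)) < d" using M[OF ij] by simp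
  have du: "dist (u (r i)) (u (r j)) \<le> d" using gd dist_fst_le[of "g (r i)" "g (r j)"] unfolding g_def by simp
  have dv: "dist (v (r i)) (v (r j)) \<le> d" using gd dist_snd_le[of "g (r i)" "g (r j)"] unfolding g_def by simp
  have "(f^^n) x = (f^^n) ((f^^(r i)) (u (r i)))" using u(2) by simp
  also have "\<dots> = (f^^(n + r i)) (u (r i))" by (simp only: funpow_add o_apply)
  finally have ex: "(f^^n) x = (f^^(r j)) (u (r i))" using n(2) by simp
  have "(f^^n) y = (f^^n) ((f^^(r i)) (v (r i)))" using v(2) by simp
  also have "\<dots> = (f^^(n + r i)) (v (r i))" by (simp only: funpow_add o_apply)
  finally have ey: "(f^^n) y = (f^^(r j)) (v (r i))" using n(2) by simp
  have "dist ((f^^n) x) x \<le> e/2" using d(2)[OF u(1) u(1) du, of "r j"] ex u(2)[of "r j"] by simp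
  moreover have "dist ((f^^n) y) y \<le> e/2" using d(2)[OF v(1) v(1) dv, of "r j"] ey v(2)[of "r j"] by simp
  ultimately show ?thesis using n(1) assms(3) by (intro exI[of _ n]) auto
qed

lemma F2: assumes "th > 0" shows "\<exists>N. \<forall>x\<in>X. \<exists>w\<in>Om. dist ((f^^N) x) w < th"
proof (rule ccontr)
  assume "\<not> ?thesis"
  then have "\<forall>N. \<exists>x. x \<in> X \<and> (\<forall>w\<in>Om. dist ((f^^N) x) w \<ge> th)" by (meson not_le)
  from choice[OF this] obtain xs where xs0: "\<forall>N. xs N \<in> X \<and> (\<forall>w\<in>Om. dist ((f^^N) (xs N)) w \<ge> th)" by blast
  have xs: "\<And>N. xs N \<in> X" "\<And>N w. w \<in> Om \<Longrightarrow> dist ((f^^N) (xs N)) w \<ge> th" using xs0 by auto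
  define g where "g k = (xs k, (f^^k) (xs k))" for k
  have sc: "seq_compact (X \<times> X)" using compact_Times[OF cX cX] compact_imp_seq_compact by blast
  have gin: "\<forall>k. g k \<in> X \<times> X" using xs fn_in unfolding g_def by auto
  obtain l r where r: "l \<in> X \<times> X" "strict_mono r" "(g \<circ> r) \<longlonglongrightarrow> l" using seq_compactE[OF sc gin] by blast
  define q where "q = snd l"
  have qX: "q \<in> X" using r(1) unfolding q_def by auto
  have sconv: "(\<lambda>i. (f^^(r i)) (xs (r i))) \<longlonglongrightarrow> q"
    using tendsto_snd[OF r(3)] unfolding q_def g_def by (simp add: o_def)
  have "Cauchy (g \<circ> r)" using r(3) LIMSEQ_imp_Cauchy by blast
  have qOm: "q \<in> Om"
  proof (rule rec_Om[OF qX])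
    fix e :: real assume e: "e > 0"
    obtain d where d: "d > 0" "\<And>x y n. x \<in> X \<Longrightarrow> y \<in> X \<Longrightarrow> dist x y \<le> d \<Longrightarrow> dist ((f^^n) x) ((f^^n) y) \<le> e/3"
      using L1[of "e/3"] e by auto
    have "min d (e/3) > 0" using d(1) e by simp
    then obtain M1 where M1: "\<And>i. i \<ge> M1 \<Longrightarrow> dist ((f^^(r i)) (xs (r i))) q < min d (e/3)"
      using sconv unfolding lim_sequentially by blast
    obtain M2 where M2: "\<And>i j. i \<ge> M2 \<Longrightarrow> j \<ge> M2 \<Longrightarrow> dist ((g \<circ> r) i) ((g \<circ> r) j) < d"
      using \<open>Cauchy (g \<circ> r)\<close> d(1) unfolding Cauchy_def by meson
    define i where "i = max M1 M2"
    define j where "j = r i + 1"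
    have ij: "i \<ge> M1" "i \<ge> M2" "j \<ge> M1" "j \<ge> M2" using seq_suble[OF r(2), of i] unfolding i_def j_def by auto
    have "r j \<ge> j" using seq_suble[OF r(2)] by blast
    define n where "n = r j - r i"
    have n: "n > 0" "n + r i = r j" using \<open>r j \<ge> j\<close> unfolding n_def j_def by auto
    have d1: "dist ((f^^n) q) ((f^^n) ((f^^(r i)) (xs (r i)))) \<le> e/3"
      using d(2)[OF qX fn_in[OF xs(1)]] M1[OF ij(1)] by (simp add: dist_commute)
    have "(f^^n) ((f^^(r i)) (xs (r i))) = (f^^(n + r i)) (xs (r i))" by (simp only: funpow_add o_apply)
    then have eq: "(f^^n) ((f^^(r i)) (xs (r i))) = (f^^(r j)) (xs (r i))" using n(2) by simp
    have gd: "dist (g (r i)) (g (r j)) < d" using M2[OF ij(2) ij(4)] by simp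
    have "dist (xs (r i)) (xs (r j)) \<le> d" using gd dist_fst_le[of "g (r i)" "g (r j)"] unfolding g_def by simp
    then have d2: "dist ((f^^(r j)) (xs (r i))) ((f^^(r j)) (xs (r j))) \<le> e/3" using d(2) xs(1) by blast
    have d3: "dist ((f^^(r j)) (xs (r j))) q < e/3" using M1[OF ij(3)] by simp
    have d1': "dist ((f^^n) q) ((f^^(r j)) (xs (r i))) \<le> e/3" using d1 eq by simp
    have "dist ((f^^n) q) q < e" using d1' d2 d3
      dist_triangle[of "(f^^n) q" q "(f^^(r j)) (xs (r i))"] dist_triangle[of "(f^^(r j)) (xs (r i))" q "(f^^(r j)) (xs (r j))"]
      by linarith
    then show "\<exists>n>0. dist ((f ^^ n) q) q < e" using n(1) by blast
  qed
  obtain M where "\<And>i. i \<ge> M \<Longrightarrow> dist ((f^^(r i)) (xs (r i))) q < th"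
    using sconv assms unfolding lim_sequentially by blast
  then show False using xs(2)[OF qOm, of "r M"] by force
qed

lemma ACC: fixes rho :: real assumes "rho > 0" obtains d where "d > 0"
  "\<forall>xs K0. (\<forall>i. xs i \<in> X) \<longrightarrow> (\<forall>i\<ge>K0. dist (f (xs i)) (xs (Suc i)) \<le> d) \<longrightarrow>
     (\<forall>i\<ge>K0. \<forall>k. dist ((f^^k) (xs i)) (xs (i+k)) \<le> real k * rho)"
proof -
  obtain d where d: "d > 0" "\<And>x y n. x \<in> X \<Longrightarrow> y \<in> X \<Longrightarrow> dist x y \<le> d \<Longrightarrow> dist ((f^^n) x) ((f^^n) y) \<le> rho"
    using L1[OF assms] by auto
  have "dist ((f^^k) (xs i)) (xs (i+k)) \<le> real k * rho"
    if xs: "\<And>i. xs i \<in> X" and er: "\<And>i. i \<ge> K0 \<Longrightarrow> dist (f (xs i)) (xs (Suc i)) \<le> d" and i: "i \<ge> K0" for xs K0 i k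
    using i
  proof (induction k arbitrary: i)
    case 0 then show ?case by simp
  next
    case (Suc k)
    have a: "dist ((f^^k) (f (xs i))) ((f^^k) (xs (Suc i))) \<le> rho"
      using d(2)[of "f (xs i)" "xs (Suc i)" k] xs fX er[OF Suc.prems] by auto
    have b: "dist ((f^^k) (xs (Suc i))) (xs (Suc i + k)) \<le> real k * rho" using Suc.IH[of "Suc i"] Suc.prems by simp
    have "(f^^(Suc k)) (xs i) = (f^^k) (f (xs i))" by (simp only: funpow_Suc_right o_apply)
    moreover have "xs (i + Suc k) = xs (Suc i + k)" by simp
    ultimately show ?case using a b dist_triangle[of "(f^^k) (f (xs i))" "xs (Suc i + k)" "(f^^k) (xs (Suc i))"]
      by (simp add: algebra_simps)
  qed
  then have "\<forall>xs K0. (\<forall>i. xs i \<in> X) \<longrightarrow> (\<forall>i\<ge>K0. dist (f (xs i)) (xs (Suc i)) \<le> d) \<longrightarrow>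
     (\<forall>i\<ge>K0. \<forall>k. dist ((f^^k) (xs i)) (xs (i+k)) \<le> real k * rho)" by blast
  then show ?thesis using d(1) that by blast
qed

end


definition chainr :: "'a::metric_space set \<Rightarrow> ('a \<Rightarrow> 'a) \<Rightarrow> real \<Rightarrow> 'a \<Rightarrow> 'a \<Rightarrow> bool" where
  "chainr X f g x y \<longleftrightarrow> (\<exists>m c. c 0 = x \<and> c m = y \<and> (\<forall>j\<le>m. c j \<in> nonwandering X f)
      \<and> (\<forall>j<m. Dle f g (c j) (c (Suc j))))"

definition CH :: "'a::metric_space set \<Rightarrow> ('a \<Rightarrow> 'a) \<Rightarrow> bool" where
  "CH X f \<longleftrightarrow> (\<forall>e>0. \<exists>g>0. \<forall>x y. chainr X f g x y \<longrightarrow> dist x y \<le> e)"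

definition SS :: "'a::metric_space set \<Rightarrow> ('a \<Rightarrow> 'a) \<Rightarrow> bool" where
  "SS X f \<longleftrightarrow> (\<forall>e>0. \<exists>d>0. \<forall>xs K0. (\<forall>i. xs i \<in> X) \<longrightarrow> (\<forall>i\<ge>K0. dist (f (xs i)) (xs (Suc i)) \<le> d)
      \<longrightarrow> (\<forall>k. dist ((f^^k) (xs K0)) (xs (K0+k)) \<le> e))"

context eqc begin

lemma ch_refl: assumes "x \<in> Om" shows "chainr X f g x x"
  unfolding chainr_def
  apply (rule exI[where x=0])
  apply (rule exI[where x="\<lambda>_. x"])
  using assms by simp

lemma chainrE: assumes "chainr X f g x y"
  obtains m c where "c 0 = x" "c m = y" "\<forall>j\<le>m. c j \<in> Om" "\<forall>j<m. Dle f g (c j) (c (Suc j))"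
  using assms unfolding chainr_def
  apply (elim exE conjE)
  apply (rule that)
  apply assumption+
  done

lemma chainrI: assumes "c 0 = x" "c m = y" "\<forall>j\<le>m. c j \<in> Om" "\<forall>j<m. Dle f g (c j) (c (Suc j))"
  shows "chainr X f g x y"
  unfolding chainr_def
  apply (rule exI[where x=m])
  apply (rule exI[where x=c])
  using assms by simp

lemma ch_Om: assumes "chainr X f g x y" shows "x \<in> Om \<and> y \<in> Om"
proof -
  obtain m c where c: "c 0 = x" "c m = y" "\<forall>j\<le>m. c j \<in> Om" "\<forall>j<m. Dle f g (c j) (c (Suc j))"
    by (rule chainrE[OF assms])
  then show ?thesis by auto
qed

lemma ch_snoc: assumes "chainr X f g x y" "z \<in> Om" "Dle f g y z" shows "chainr X f g x z"
proof -
  obtain m c where c: "c 0 = x" "c m = y" "\<forall>j\<le>m. c j \<in> Om" "\<forall>j<m. Dle f g (c j) (c (Suc j))"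
    by (rule chainrE[OF assms(1)])
  define c' where "c' j = (if j \<le> m then c j else z)" for j
  have "c' 0 = x" "c' (Suc m) = z" "\<forall>j\<le>Suc m. c' j \<in> Om" "\<forall>j<Suc m. Dle f g (c' j) (c' (Suc j))"
    using c assms unfolding c'_def by (auto simp: less_Suc_eq le_Suc_eq)
  then show ?thesis by (rule chainrI)
qed

lemma ch_f: assumes "chainr X f g x y" shows "chainr X f g (f x) (f y)"
proof -
  obtain m c where c: "c 0 = x" "c m = y" "\<forall>j\<le>m. c j \<in> Om" "\<forall>j<m. Dle f g (c j) (c (Suc j))"
    by (rule chainrE[OF assms(1)])
  have "(f \<circ> c) 0 = f x" "(f \<circ> c) m = f y" "\<forall>j\<le>m. (f \<circ> c) j \<in> Om" "\<forall>j<m. Dle f g ((f \<circ> c) j) ((f \<circ> c) (Suc j))"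
    using c Om_f Dle_f by auto
  then show ?thesis by (rule chainrI)
qed

lemma ch_sym: assumes "chainr X f g x y" shows "chainr X f g y x"
proof -
  obtain m c where c: "c 0 = x" "c m = y" "\<forall>j\<le>m. c j \<in> Om" "\<forall>j<m. Dle f g (c j) (c (Suc j))"
    by (rule chainrE[OF assms(1)])
  define c' where "c' j = c (m - j)" for j
  have "\<forall>j<m. Dle f g (c' j) (c' (Suc j))"
  proof (intro allI impI)
    fix j assume "j < m"
    then have eq: "Suc (m - Suc j) = m - j" by simp
    have "m - Suc j < m" using \<open>j<m\<close> by simp
    then have "Dle f g (c (m - Suc j)) (c (Suc (m - Suc j)))" using c(4) by blast
    then have "Dle f g (c (m - Suc j)) (c (m - j))" using eq by simp
    then show "Dle f g (c' j) (c' (Suc j))" using Dle_sym unfolding c'_def by blast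
  qed
  moreover have "c' 0 = y" "c' m = x" "\<forall>j\<le>m. c' j \<in> Om" using c unfolding c'_def by auto
  ultimately show ?thesis by (rule chainrI[rotated 3])
qed

lemma ch_trans: assumes "chainr X f g x y" "chainr X f g y z" shows "chainr X f g x z"
proof -
  obtain m c where c: "c 0 = x" "c m = y" "\<forall>j\<le>m. c j \<in> Om" "\<forall>j<m. Dle f g (c j) (c (Suc j))"
    by (rule chainrE[OF assms(1)])
  obtain m2 c2 where c2: "c2 0 = y" "c2 m2 = z" "\<forall>j\<le>m2. c2 j \<in> Om" "\<forall>j<m2. Dle f g (c2 j) (c2 (Suc j))"
    by (rule chainrE[OF assms(2)])
  define c' where "c' j = (if j \<le> m then c j else c2 (j - m))" for j
  have "\<forall>j<m+m2. Dle f g (c' j) (c' (Suc j))"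
  proof (intro allI impI)
    fix j assume j: "j < m + m2"
    show "Dle f g (c' j) (c' (Suc j))"
    proof (cases "j < m")
      case True then show ?thesis using c(4) unfolding c'_def by auto
    next
      case False
      then have "Suc j - m = Suc (j - m)" "j - m < m2" using j by auto
      then show ?thesis using c2 c False unfolding c'_def
        by (cases "j = m") auto
    qed
  qed
  moreover have "c' 0 = x" "c' (m+m2) = z" "\<forall>j\<le>m+m2. c' j \<in> Om" using c c2 unfolding c'_def by auto
  ultimately show ?thesis by (rule chainrI[rotated 3])
qed

lemma ch_mono: assumes "chainr X f g x y" "g \<le> g'" shows "chainr X f g' x y"
proof -
  obtain m c where c: "c 0 = x" "c m = y" "\<forall>j\<le>m. c j \<in> Om" "\<forall>j<m. Dle f g (c j) (c (Suc j))"
    by (rule chainrE[OF assms(1)])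
  have "\<forall>j<m. Dle f g' (c j) (c (Suc j))" using c(4) Dle_mono assms(2) by blast
  then show ?thesis using c(1-3) by (rule chainrI[rotated 3])
qed

lemma S_CH: assumes "shadowing X f" shows "CH X f"
  unfolding CH_def
proof (intro allI impI)
  fix e :: real assume e: "e > 0"
  obtain ds where ds: "ds > 0" "\<And>x y n. x \<in> X \<Longrightarrow> y \<in> X \<Longrightarrow> dist x y \<le> ds \<Longrightarrow> dist ((f^^n) x) ((f^^n) y) \<le> e/4"
    using L1[of "e/4"] e by auto
  define es where "es = min ds (e/4)"
  have es: "es > 0" using ds e unfolding es_def by auto
  obtain d where d: "d > 0" "\<And>xs. pseudo_orbit X f d xs \<Longrightarrow> \<exists>x\<in>X. shadows f es xs x"
    using assms es unfolding shadowing_def by meson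
  have "dist x y \<le> e" if ch: "chainr X f d x y" for x y
  proof -
    obtain m c where c: "c 0 = x" "c m = y" "\<forall>j\<le>m. c j \<in> Om" "\<forall>j<m. Dle f d (c j) (c (Suc j))"
    by (rule chainrE[OF ch])
    define p where "p i = (f^^i) (c (min i m))" for i
    have po: "pseudo_orbit X f d p" unfolding pseudo_orbit_def
    proof (intro conjI allI)
      fix i show "p i \<in> X" unfolding p_def using c(3) Om_sub fn_in by (meson min.cobounded2 subsetD)
    next
      fix i show "dist (f (p i)) (p (Suc i)) \<le> d"
      proof (cases "i < m")
        case True
        then have "dist ((f^^(Suc i)) (c i)) ((f^^(Suc i)) (c (Suc i))) \<le> d" using c(4) unfolding Dle_def by blast
        then show ?thesis using True unfolding p_def by (simp add: min_def)
      next
        case False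
        then show ?thesis using d(1) unfolding p_def by (simp add: min_def)
      qed
    qed
    obtain z where z: "z \<in> X" "shadows f es p z" using d(2)[OF po] by blast
    have xX: "x \<in> X" "y \<in> X" using c Om_sub by auto
    have "dist (p 0) ((f^^0) z) \<le> es" using z(2) unfolding shadows_def by blast
    then have "dist x z \<le> es" using c(1) unfolding p_def by simp
    then have "dist x z \<le> ds" unfolding es_def by simp
    then have xz: "\<And>n. dist ((f^^n) x) ((f^^n) z) \<le> e/4" using ds(2) xX z(1) by blast
    have xyOm: "x \<in> Om" "y \<in> Om" using c by auto
    obtain n where n: "n \<ge> m" "dist ((f^^n) x) x < e/4" "dist ((f^^n) y) y < e/4"
      using JR[OF xyOm, of "e/4" m] e by auto
    have "dist (p n) ((f^^n) z) \<le> es" using z(2) unfolding shadows_def by blast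
    moreover have "p n = (f^^n) y" using n(1) c(2) unfolding p_def by (simp add: min_absorb2)
    ultimately have yz: "dist ((f^^n) y) ((f^^n) z) \<le> e/4" unfolding es_def by simp
    have "dist x y \<le> dist x ((f^^n) x) + dist ((f^^n) x) ((f^^n) z) + dist ((f^^n) z) ((f^^n) y) + dist ((f^^n) y) y"
      using dist_triangle[of x y "(f^^n) x"] dist_triangle[of "(f^^n) x" y "(f^^n) z"] dist_triangle[of "(f^^n) z" y "(f^^n) y"]
      by linarith
    moreover have "dist x ((f^^n) x) < e/4" using n(2) by (simp add: dist_commute)
    moreover have "dist ((f^^n) z) ((f^^n) y) \<le> e/4" using yz by (simp add: dist_commute)
    ultimately show ?thesis using n(3) xz[of n] by linarith
  qed
  then show "\<exists>g>0. \<forall>x y. chainr X f g x y \<longrightarrow> dist x y \<le> e" using d(1) by blast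
qed

end


context eqc begin

lemma CH_SS: assumes "CH X f" shows "SS X f"
  unfolding SS_def
proof (intro allI impI)
  fix e :: real assume e: "e > 0"
  obtain r1 where r1: "r1 > 0" "\<And>x y n. x \<in> X \<Longrightarrow> y \<in> X \<Longrightarrow> dist x y \<le> r1 \<Longrightarrow> dist ((f^^n) x) ((f^^n) y) \<le> e/3"
    using L1[of "e/3"] e by auto
  have e3: "e/3 > 0" using e by simp
  obtain g where g0: "g > 0" "\<forall>x y. chainr X f g x y \<longrightarrow> dist x y \<le> e/3"
    using assms[unfolded CH_def, rule_format, OF e3] by blast
  have g: "g > 0" "\<And>x y. chainr X f g x y \<Longrightarrow> dist x y \<le> e/3" using g0 by auto
  obtain dg where dg: "dg > 0" "\<And>x y. x \<in> X \<Longrightarrow> y \<in> X \<Longrightarrow> dist x y \<le> dg \<Longrightarrow> Dle f g x y"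
    using L1D[OF g(1)] by auto
  obtain r2 where r2: "r2 > 0" "\<And>x y n. x \<in> X \<Longrightarrow> y \<in> X \<Longrightarrow> dist x y \<le> r2 \<Longrightarrow> dist ((f^^n) x) ((f^^n) y) \<le> dg/3"
    using L1[of "dg/3"] dg by auto
  define th where "th = min (r1/3) (min (r2/2) (min (dg/6) (e/6)))"
  have th: "th > 0" "3*th \<le> r1" "2*th \<le> r2" "6*th \<le> dg" "6*th \<le> e" using r1 r2 dg e unfolding th_def by auto
  obtain N where N: "\<And>x. x \<in> X \<Longrightarrow> \<exists>w\<in>Om. dist ((f^^N) x) w < th" using F2[OF th(1)] by blast
  define rho where "rho = th / (N+1)"
  have rho: "rho > 0" "N * rho < th" using th unfolding rho_def by (auto simp: field_simps)
  obtain da where da: "da > 0" "\<forall>xs K0. (\<forall>i. xs i \<in> X) \<longrightarrow> (\<forall>i\<ge>K0. dist (f (xs i)) (xs (Suc i)) \<le> da) \<longrightarrow>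
     (\<forall>i\<ge>K0. \<forall>k. dist ((f^^k) (xs i)) (xs (i+k)) \<le> real k * rho)"
    by (rule ACC[OF rho(1)])
  define d where "d = min da (dg/3)"
  have "dist ((f^^k) (xs K0)) (xs (K0+k)) \<le> e"
    if xs: "\<forall>i. xs i \<in> X" and er: "\<forall>i\<ge>K0. dist (f (xs i)) (xs (Suc i)) \<le> d" for xs K0 k
  proof -
    have xsX: "\<And>i. xs i \<in> X" using xs by blast
    have erA: "\<forall>i\<ge>K0. dist (f (xs i)) (xs (Suc i)) \<le> da" using er unfolding d_def by auto
    have acc0: "\<forall>i\<ge>K0. \<forall>k. dist ((f^^k) (xs i)) (xs (i+k)) \<le> real k * rho"
      using da(2) xs erA by blast
    have acc: "\<And>i k. i \<ge> K0 \<Longrightarrow> dist ((f^^k) (xs i)) (xs (i+k)) \<le> real k * rho"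
      using acc0 by blast
    have accN: "\<And>i k. i \<ge> K0 \<Longrightarrow> k \<le> N \<Longrightarrow> dist ((f^^k) (xs i)) (xs (i+k)) < th"
    proof -
      fix i k assume "i \<ge> K0" "k \<le> N"
      then have "real k * rho \<le> real N * rho" using rho(1) by simp
      then show "dist ((f^^k) (xs i)) (xs (i+k)) < th" using acc[OF \<open>i \<ge> K0\<close>, of k] rho(2) by linarith
    qed
    have "\<forall>i. \<exists>w. i \<ge> K0 + N \<longrightarrow> w \<in> Om \<and> dist (xs i) w < 2*th"
    proof
      fix i show "\<exists>w. i \<ge> K0 + N \<longrightarrow> w \<in> Om \<and> dist (xs i) w < 2*th"
      proof (cases "i \<ge> K0 + N")
        case True
        obtain w where w: "w \<in> Om" "dist ((f^^N) (xs (i-N))) w < th" using N[OF xsX] by blast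
        have "dist ((f^^N) (xs (i-N))) (xs i) < th" using accN[of "i-N" N] True by simp
        then have "dist (xs i) w < 2*th" using w(2) dist_triangle[of "xs i" w "(f^^N) (xs (i-N))"]
          by (simp add: dist_commute)
        then show ?thesis using w(1) by blast
      qed simp
    qed
    from choice[OF this] obtain om where om0: "\<forall>i. i \<ge> K0 + N \<longrightarrow> om i \<in> Om \<and> dist (xs i) (om i) < 2*th" by blast
    have om: "\<And>i. i \<ge> K0 + N \<Longrightarrow> om i \<in> Om \<and> dist (xs i) (om i) < 2*th" using om0 by blast
    define b where "b = K0 + N"
    have chain: "chainr X f g ((f^^j) (om b)) (om (b+j))" for j
    proof (induction j)
      case 0 then show ?case using om[of b] ch_refl unfolding b_def by auto
    next
      case (Suc j)
      let ?i = "b + j"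
      have oi: "om ?i \<in> Om" "dist (xs ?i) (om ?i) < 2*th" using om[of ?i] unfolding b_def by auto
      have oi1: "om (Suc ?i) \<in> Om" "dist (xs (Suc ?i)) (om (Suc ?i)) < 2*th" using om[of "Suc ?i"] unfolding b_def by auto
      have "dist (f (om ?i)) (f (xs ?i)) \<le> dg/3"
        using r2(2)[of "om ?i" "xs ?i" 1] oi xsX Om_sub th by (auto simp: dist_commute)
      moreover have "dist (f (xs ?i)) (xs (Suc ?i)) \<le> dg/3" using er unfolding d_def b_def by auto
      moreover have "dist (xs (Suc ?i)) (om (Suc ?i)) < dg/3" using oi1 th by auto
      ultimately have "dist (f (om ?i)) (om (Suc ?i)) \<le> dg"
        using dist_triangle[of "f (om ?i)" "om (Suc ?i)" "f (xs ?i)"] dist_triangle[of "f (xs ?i)" "om (Suc ?i)" "xs (Suc ?i)"]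
        by linarith
      moreover have "f (om ?i) \<in> X" "om (Suc ?i) \<in> X" using oi(1) oi1(1) Om_sub fX by auto
      ultimately have Dl: "Dle f g (f (om ?i)) (om (Suc ?i))" using dg(2) by blast
      have "chainr X f g (f ((f^^j) (om b))) (om (Suc ?i))" by (rule ch_snoc[OF ch_f[OF Suc.IH] oi1(1) Dl])
      then show ?case by simp
    qed
    show ?thesis
    proof (cases "k < N")
      case True
      then show ?thesis using accN[of K0 k] th by simp
    next
      case False
      define k' where "k' = k - N"
      have kk: "k = N + k'" using False unfolding k'_def by simp
      have ob: "om b \<in> Om" "dist (xs b) (om b) < 2*th" using om[of b] unfolding b_def by auto
      have a1: "dist ((f^^N) (xs K0)) (xs b) < th" using accN[of K0 N] unfolding b_def by simp
      have "dist ((f^^N) (xs K0)) (om b) \<le> r1"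
        using a1 ob(2) dist_triangle[of "(f^^N) (xs K0)" "om b" "xs b"] th by linarith
      moreover have X1: "(f^^N) (xs K0) \<in> X" using fn_in xsX by blast
      moreover have X2: "om b \<in> X" using ob(1) Om_sub by blast
      ultimately have t1: "dist ((f^^k') ((f^^N) (xs K0))) ((f^^k') (om b)) \<le> e/3"
        using r1(2)[OF X1 X2] by blast
      have t2: "dist ((f^^k') (om b)) (om (b+k')) \<le> e/3" using g(2)[OF chain] .
      have ob2: "dist (xs (b+k')) (om (b+k')) < 2*th" using om[of "b+k'"] unfolding b_def by auto
      have eq1: "(f^^k) (xs K0) = (f^^k') ((f^^N) (xs K0))" unfolding kk by (simp only: add.commute[of N] funpow_add o_apply)
      have eq2: "K0 + k = b + k'" using kk unfolding b_def by simp
      have e1: "dist ((f^^k) (xs K0)) ((f^^k') (om b)) \<le> e/3" using t1 eq1 by simp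
      have e2: "dist ((f^^k') (om b)) (om (K0+k)) \<le> e/3" using t2 eq2 by simp
      have e3: "dist (om (K0+k)) (xs (K0+k)) < e/3" using ob2 eq2 th by (simp add: dist_commute)
      show ?thesis using e1 e2 e3
        dist_triangle[of "(f^^k) (xs K0)" "xs (K0+k)" "(f^^k') (om b)"]
        dist_triangle[of "(f^^k') (om b)" "xs (K0+k)" "om (K0+k)"]
        by linarith
    qed
  qed
  moreover have "d > 0" using da dg unfolding d_def by auto
  ultimately show "\<exists>d>0. \<forall>xs K0. (\<forall>i. xs i \<in> X) \<longrightarrow> (\<forall>i\<ge>K0. dist (f (xs i)) (xs (Suc i)) \<le> d)
      \<longrightarrow> (\<forall>k. dist ((f^^k) (xs K0)) (xs (K0+k)) \<le> e)" by blast
qed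

lemma SS_S: assumes "SS X f" shows "shadowing X f"
  unfolding shadowing_def
proof (intro allI impI)
  fix e :: real assume "e > 0"
  then obtain d where d: "d > 0" "\<forall>xs K0. (\<forall>i. xs i \<in> X) \<longrightarrow> (\<forall>i\<ge>K0. dist (f (xs i)) (xs (Suc i)) \<le> d)
      \<longrightarrow> (\<forall>k. dist ((f^^k) (xs K0)) (xs (K0+k)) \<le> e)" using assms unfolding SS_def by blast
  have "\<exists>x\<in>X. shadows f e xs x" if po: "pseudo_orbit X f d xs" for xs
  proof -
    have "\<forall>k. dist ((f^^k) (xs 0)) (xs (0+k)) \<le> e" using d(2) po unfolding pseudo_orbit_def by blast
    then show ?thesis using po unfolding pseudo_orbit_def shadows_def by (auto simp: dist_commute)
  qed
  then show "\<exists>d>0. \<forall>xs. pseudo_orbit X f d xs \<longrightarrow> (\<exists>x\<in>X. shadows f e xs x)" using d(1) by blast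
qed

end


context eqc begin

lemma clopen_parts:
  assumes "openin (top_of_set Om) V" "closedin (top_of_set Om) V"
  shows "compact V" "closed (Om - V)" "V \<subseteq> Om"
proof -
  have cV: "closed V" using closedin_closed_trans[OF assms(2) Om_closed] .
  show "V \<subseteq> Om" using openin_imp_subset[OF assms(1)] .
  then have "Om \<inter> V = V" by blast
  then show "compact V" using compact_Int_closed[OF Om_compact cV] by simp
  have "openin (top_of_set Om) (Om - (Om - V))" using assms(1) \<open>V \<subseteq> Om\<close> by (simp add: Diff_Diff_Int Int_absorb1)
  then have "closedin (top_of_set Om) (Om - V)" unfolding closedin_def by simp
  then show "closed (Om - V)" using closedin_closed_trans Om_closed by blast
qed

lemma Z_CH: assumes Z: "zero_dimensional Om" shows "CH X f"
  unfolding CH_def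
proof (intro allI impI)
  fix e :: real assume e: "e > 0"
  have "\<forall>v\<in>Om. \<exists>V. openin (top_of_set Om) V \<and> closedin (top_of_set Om) V \<and> v \<in> V \<and> V \<subseteq> ball v (e/2)"
  proof
    fix v assume v: "v \<in> Om"
    have "open (ball v (e/2))" "v \<in> ball v (e/2)" using e by auto
    then show "\<exists>V. openin (top_of_set Om) V \<and> closedin (top_of_set Om) V \<and> v \<in> V \<and> V \<subseteq> ball v (e/2)"
      using Z v unfolding zero_dimensional_def by blast
  qed
  from bchoice[OF this] obtain Vf where Vf: "\<forall>v\<in>Om. openin (top_of_set Om) (Vf v) \<and> closedin (top_of_set Om) (Vf v) \<and> v \<in> Vf v \<and> Vf v \<subseteq> ball v (e/2)"
    by blast
  have "\<forall>v\<in>Om. \<exists>W. open W \<and> Vf v = Om \<inter> W" using Vf unfolding openin_open by blast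
  from bchoice[OF this] obtain Wf where Wf: "\<forall>v\<in>Om. open (Wf v) \<and> Vf v = Om \<inter> Wf v" by blast
  have "Om \<subseteq> (\<Union>v\<in>Om. Wf v)" using Vf Wf by blast
  then obtain F where F: "F \<subseteq> Om" "finite F" "Om \<subseteq> (\<Union>v\<in>F. Wf v)"
    using compactE_image[OF Om_compact, of Om Wf] Wf by blast
  define gv where "gv v = (if Vf v \<noteq> {} \<and> Om - Vf v \<noteq> {} then setdist (Vf v) (Om - Vf v) else 1)" for v
  have gvpos: "gv v > 0" if "v \<in> Om" for v
  proof (cases "Vf v \<noteq> {} \<and> Om - Vf v \<noteq> {}")
    case True
    have "compact (Vf v)" "closed (Om - Vf v)" using clopen_parts Vf that by auto
    then have "setdist (Vf v) (Om - Vf v) > 0" using True setdist_gt_0_compact_closed by blast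
    then show ?thesis using True unfolding gv_def by simp
  next
    case False then show ?thesis unfolding gv_def by auto
  qed
  have gvle: "gv v \<le> dist a b" if "v \<in> Om" "a \<in> Vf v" "b \<in> Om" "b \<notin> Vf v" for v a b
  proof -
    have "Vf v \<noteq> {} \<and> Om - Vf v \<noteq> {}" using that by blast
    then show ?thesis unfolding gv_def using setdist_le_dist[of a "Vf v" b "Om - Vf v"] that by simp
  qed
  define g0 where "g0 = Min (insert 1 (gv ` F))"
  have g0: "g0 > 0" unfolding g0_def using F gvpos by (subst Min_gr_iff) auto
  have g0le: "g0 \<le> gv v" if "v \<in> F" for v unfolding g0_def using F(2) that by simp
  have "dist x y \<le> e" if ch: "chainr X f (g0/2) x y" for x y
  proof -
    obtain m c where c: "c 0 = x" "c m = y" "\<forall>j\<le>m. c j \<in> Om" "\<forall>j<m. Dle f (g0/2) (c j) (c (Suc j))"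
      by (rule chainrE[OF ch])
    have xOm: "x \<in> Om" using c by auto
    then obtain v where v: "v \<in> F" "x \<in> Wf v" using F(3) by blast
    have vOm: "v \<in> Om" using v F by blast
    have xV: "x \<in> Vf v" using xOm v Wf vOm by blast
    have "j \<le> m \<longrightarrow> c j \<in> Vf v" for j
    proof (induction j)
      case 0 then show ?case using xV c by simp
    next
      case (Suc j)
      show ?case
      proof
        assume jm: "Suc j \<le> m"
        then have cj: "c j \<in> Vf v" using Suc by simp
        have "j < m" using jm by simp
        then have "Dle f (g0/2) (c j) (c (Suc j))" using c(4) by blast
        then have "dist (c j) (c (Suc j)) \<le> g0/2" by (rule Dle_dist)
        then have lt: "dist (c j) (c (Suc j)) < gv v" using g0le[OF v(1)] g0 by linarith
        show "c (Suc j) \<in> Vf v"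
        proof (rule ccontr)
          assume "c (Suc j) \<notin> Vf v"
          then have "gv v \<le> dist (c j) (c (Suc j))" using gvle[OF vOm cj] c(3) jm by blast
          then show False using lt by linarith
        qed
      qed
    qed
    then have "y \<in> Vf v" using c(2) by blast
    moreover have "Vf v \<subseteq> ball v (e/2)" using Vf vOm by blast
    ultimately have "y \<in> ball v (e/2)" "x \<in> ball v (e/2)" using xV by auto
    then have "dist v y < e/2" "dist v x < e/2" by auto
    then show ?thesis using dist_triangle[of x y v] by (simp add: dist_commute)
  qed
  then show "\<exists>g>0. \<forall>x y. chainr X f g x y \<longrightarrow> dist x y \<le> e" using g0 by (intro exI[of _ "g0/2"]) auto
qed

lemma CH_Z: assumes CH: "CH X f" shows "zero_dimensional Om"
  unfolding zero_dimensional_def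
proof (intro ballI allI impI)
  fix x U assume x: "x \<in> Om" and U: "open U \<and> x \<in> U"
  obtain r where r: "r > 0" "ball x r \<subseteq> U" using U open_contains_ball by blast
  have r2: "r/2 > 0" using r by simp
  obtain g where g0: "g > 0" "\<forall>x y. chainr X f g x y \<longrightarrow> dist x y \<le> r/2"
    using CH[unfolded CH_def, rule_format, OF r2] by blast
  obtain d where d: "d > 0" "\<And>x y. x \<in> X \<Longrightarrow> y \<in> X \<Longrightarrow> dist x y \<le> d \<Longrightarrow> Dle f g x y"
    using L1D[OF g0(1)] by blast
  define V where "V = {y \<in> Om. chainr X f g x y}"
  have xV: "x \<in> V" unfolding V_def using x ch_refl by blast
  have VU: "V \<subseteq> U"
  proof
    fix y assume "y \<in> V"
    then have "dist x y \<le> r/2" using g0(2) unfolding V_def by blast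
    then show "y \<in> U" using r by auto
  qed
  have step: "chainr X f g x y'" if "chainr X f g x y" "y' \<in> Om" "dist y y' < d" for y y'
  proof -
    have "y \<in> Om" using ch_Om[OF that(1)] by blast
    then have "y \<in> X" "y' \<in> X" using that(2) Om_sub by auto
    moreover have "dist y y' \<le> d" using that(3) by simp
    ultimately have "Dle f g y y'" using d(2) by blast
    then show ?thesis using ch_snoc that(1,2) by blast
  qed
  have opV: "openin (top_of_set Om) V"
    unfolding openin_euclidean_subtopology_iff
  proof (intro conjI ballI)
    show "V \<subseteq> Om" unfolding V_def by blast
    fix y assume "y \<in> V"
    then have "chainr X f g x y" unfolding V_def by blast
    then have "\<forall>y'\<in>Om. dist y' y < d \<longrightarrow> y' \<in> V" using step unfolding V_def by (simp add: dist_commute)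
    then show "\<exists>e>0. \<forall>y'\<in>Om. dist y' y < e \<longrightarrow> y' \<in> V" using d(1) by blast
  qed
  have "openin (top_of_set Om) (Om - V)"
    unfolding openin_euclidean_subtopology_iff
  proof (intro conjI ballI)
    show "Om - V \<subseteq> Om" by blast
    fix y assume y: "y \<in> Om - V"
    have "\<forall>y'\<in>Om. dist y' y < d \<longrightarrow> y' \<in> Om - V"
    proof (intro ballI impI)
      fix y' assume y': "y' \<in> Om" "dist y' y < d"
      show "y' \<in> Om - V"
      proof
        show "y' \<in> Om" using y' by simp
        show "y' \<notin> V"
        proof
          assume "y' \<in> V"
          then have "chainr X f g x y'" unfolding V_def by blast
          then have "chainr X f g x y" using step y y' by blast
          then show False using y unfolding V_def by blast
        qed
      qed
    qed
    then show "\<exists>e>0. \<forall>y'\<in>Om. dist y' y < e \<longrightarrow> y' \<in> Om - V" using d(1) by blast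
  qed
  then have clV: "closedin (top_of_set Om) V" unfolding closedin_def using V_def by auto
  show "\<exists>V. openin (top_of_set Om) V \<and> closedin (top_of_set Om) V \<and> x \<in> V \<and> V \<subseteq> U"
    using opV clV xV VU by blast
qed

lemma Z_T: assumes Z: "zero_dimensional Om" shows "totally_disconnected Om"
  unfolding totally_disconnected_def
proof (intro allI impI)
  fix C assume C: "C \<subseteq> Om \<and> connected C"
  show "\<exists>a. C \<subseteq> {a}"
  proof (cases "C = {}")
    case True then show ?thesis by blast
  next
    case False
    then obtain a where a: "a \<in> C" by blast
    have "C \<subseteq> {a}"
    proof
      fix b assume b: "b \<in> C"
      show "b \<in> {a}"
      proof (rule ccontr)
        assume "b \<notin> {a}"
        then have ab: "dist a b > 0" by simp
        have aOm: "a \<in> Om" using a C by blast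
        have "open (ball a (dist a b))" "a \<in> ball a (dist a b)" using ab by auto
        then obtain V where V: "openin (top_of_set Om) V" "closedin (top_of_set Om) V" "a \<in> V" "V \<subseteq> ball a (dist a b)"
          using Z aOm unfolding zero_dimensional_def by blast
        have bV: "b \<notin> V" using V(4) by auto
        obtain W where W: "open W" "V = Om \<inter> W" using V(1) unfolding openin_open by blast
        obtain K where K: "closed K" "V = Om \<inter> K" using V(2) unfolding closedin_closed by blast
        have e1: "C \<inter> W = C \<inter> V" "C \<inter> K = C \<inter> V" using W K C by auto
        have "openin (top_of_set C) (C \<inter> V)" using openin_open_Int[OF W(1), of C] e1 by simp
        moreover have "closedin (top_of_set C) (C \<inter> V)" using closedin_closed_Int[OF K(1), of C] e1 by simp
        ultimately have "C \<inter> V = {} \<or> C \<inter> V = C" using C unfolding connected_clopen by blast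
        then show False using a b V(3) bV by blast
      qed
    qed
    then show ?thesis by blast
  qed
qed

lemma T_Z: assumes T: "totally_disconnected Om" shows "zero_dimensional Om"
  unfolding zero_dimensional_def
proof (intro ballI allI impI)
  fix x U assume x: "x \<in> Om" and U: "open U \<and> x \<in> U"
  define Y where "Y = top_of_set Om"
  have tY: "topspace Y = Om" unfolding Y_def by simp
  have csY: "compact_space Y" unfolding Y_def using Om_compact by (simp add: compact_space_subtopology)
  have hY: "Hausdorff_space Y" unfolding Y_def by (simp add: Hausdorff_space_subtopology)
  have lY: "locally_compact_space Y" using csY compact_imp_locally_compact_space by blast
  have cc: "connected_component_of_set Y x = {x}"
  proof
    have "connectedin Y (connected_component_of_set Y x)" by (rule connectedin_connected_component_of)
    then have "connected (connected_component_of_set Y x) \<and> connected_component_of_set Y x \<subseteq> Om"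
      unfolding Y_def connectedin_subtopology by simp
    then obtain a where "connected_component_of_set Y x \<subseteq> {a}" using T unfolding totally_disconnected_def by blast
    moreover have "x \<in> connected_component_of_set Y x" using x tY connected_component_of_refl by fastforce
    ultimately show "connected_component_of_set Y x \<subseteq> {x}" by blast
    show "{x} \<subseteq> connected_component_of_set Y x" using x tY connected_component_of_refl by fastforce
  qed
  have "{x} \<in> connected_components_of Y" unfolding connected_components_of_def using cc x tY by force
  moreover have "compactin Y {x}" using x tY by simp
  ultimately have q: "{x} \<in> quasi_components_of Y" using compact_quasi_eq_connected_components_of[OF lY hY] by blast
  have "openin Y (Om \<inter> U)" unfolding Y_def using U by blast
  then have "closedin Y (Om - U)" unfolding closedin_def tY by (simp add: Diff_Diff_Int Int_commute)
  then have "compactin Y (Om - U)" using closedin_compact_space csY by blast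
  moreover have "disjnt {x} (Om - U)" using U by auto
  ultimately have "separated_between Y {x} (Om - U)" using separated_between_quasi_component_compact[OF q] by blast
  then obtain A B where AB: "openin Y A" "openin Y B" "A \<union> B = Om" "disjnt A B" "{x} \<subseteq> A" "Om - U \<subseteq> B"
    unfolding separated_between_def tY by blast
  have "Om - A = B" using AB(3,4) unfolding disjnt_def by blast
  then have "closedin Y A" unfolding closedin_def tY using AB(2,3) by auto
  moreover have "A \<subseteq> U" using AB(3,4,6) unfolding disjnt_def by blast
  ultimately show "\<exists>V. openin (top_of_set Om) V \<and> closedin (top_of_set Om) V \<and> x \<in> V \<and> V \<subseteq> U"
    using AB(1,5) unfolding Y_def by blast
qed

end


context eqc begin

lemma PRE: assumes "th > 0" obtains d N where "d > 0"
  "\<forall>xs K0. (\<forall>i. xs i \<in> X) \<longrightarrow> (\<forall>i\<ge>K0. dist (f (xs i)) (xs (Suc i)) \<le> d) \<longrightarrow>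
     (\<forall>K\<ge>K0+N. \<exists>y\<in>X. dist ((f^^K) y) (xs K) < th)"
proof -
  have th3: "th/3 > 0" using assms by simp
  obtain N where N: "\<forall>x\<in>X. \<exists>w\<in>Om. dist ((f^^N) x) w < th/3" using F2[OF th3] by blast
  define rho where "rho = th / (3*(N+1))"
  have rho: "rho > 0" "real N * rho < th/3" using assms unfolding rho_def by (auto simp: field_simps)
  obtain da where da: "da > 0" "\<forall>xs K0. (\<forall>i. xs i \<in> X) \<longrightarrow> (\<forall>i\<ge>K0. dist (f (xs i)) (xs (Suc i)) \<le> da) \<longrightarrow>
     (\<forall>i\<ge>K0. \<forall>k. dist ((f^^k) (xs i)) (xs (i+k)) \<le> real k * rho)"
    by (rule ACC[OF rho(1)])
  have "\<exists>y\<in>X. dist ((f^^K) y) (xs K) < th"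
    if xs: "\<forall>i. xs i \<in> X" and er: "\<forall>i\<ge>K0. dist (f (xs i)) (xs (Suc i)) \<le> da" and K: "K \<ge> K0 + N" for xs K0 K
  proof -
    have acc: "\<forall>i\<ge>K0. \<forall>k. dist ((f^^k) (xs i)) (xs (i+k)) \<le> real k * rho" using da(2) xs er by blast
    define i where "i = K - N"
    have i: "i \<ge> K0" "i + N = K" using K unfolding i_def by auto
    have a1: "dist ((f^^N) (xs i)) (xs K) < th/3" using acc i rho(2) by (metis order.strict_trans1)
    obtain w where w: "w \<in> Om" "dist ((f^^N) (xs i)) w < th/3" using N xs by blast
    obtain n where n: "n \<ge> K" "dist ((f^^n) w) w < th/3" using RecN[OF w(1) th3] by blast
    define y where "y = (f^^(n-K)) w"
    have yX: "y \<in> X" unfolding y_def using fn_in w(1) Om_sub by blast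
    have "(f^^K) y = (f^^(K + (n-K))) w" unfolding y_def by (simp only: funpow_add o_apply)
    then have eq: "(f^^K) y = (f^^n) w" using n(1) by simp
    have "dist ((f^^n) w) (xs K) < th" using n(2) w(2) a1
      dist_triangle[of "(f^^n) w" "xs K" w] dist_triangle[of w "xs K" "(f^^N) (xs i)"]
      by (simp add: dist_commute)
    then show ?thesis using eq yX by (intro bexI[of _ y]) simp_all
  qed
  then show ?thesis using that da(1) by blast
qed

lemma SS_L: assumes SS: "SS X f" shows "limit_shadowing X f"
  unfolding limit_shadowing_def
proof (intro allI impI)
  fix xs assume A: "(\<forall>i. xs i \<in> X) \<and> (\<lambda>i. dist (f (xs i)) (xs (Suc i))) \<longlonglongrightarrow> 0"
  have xs: "\<forall>i. xs i \<in> X" using A by blast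
  have conv: "(\<lambda>i. dist (f (xs i)) (xs (Suc i))) \<longlonglongrightarrow> 0" using A by blast
  have CL: "\<exists>K. \<exists>y\<in>X. \<forall>i\<ge>K. dist ((f^^i) y) (xs i) \<le> e" if e: "e > 0" for e
  proof -
    have e2: "e/2 > 0" using e by simp
    obtain r1 where r1: "r1 > 0" "\<And>x y n. x \<in> X \<Longrightarrow> y \<in> X \<Longrightarrow> dist x y \<le> r1 \<Longrightarrow> dist ((f^^n) x) ((f^^n) y) \<le> e/2"
      using L1[OF e2] by blast
    obtain ds where ds: "ds > 0" "\<forall>xs K0. (\<forall>i. xs i \<in> X) \<longrightarrow> (\<forall>i\<ge>K0. dist (f (xs i)) (xs (Suc i)) \<le> ds)
      \<longrightarrow> (\<forall>k. dist ((f^^k) (xs K0)) (xs (K0+k)) \<le> e/2)"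
      using SS[unfolded SS_def, rule_format, OF e2] by blast
    obtain dp N where dp: "dp > 0" "\<forall>xs K0. (\<forall>i. xs i \<in> X) \<longrightarrow> (\<forall>i\<ge>K0. dist (f (xs i)) (xs (Suc i)) \<le> dp) \<longrightarrow>
     (\<forall>K\<ge>K0+N. \<exists>y\<in>X. dist ((f^^K) y) (xs K) < r1)"
      by (rule PRE[OF r1(1)])
    have "min ds dp > 0" using ds dp by simp
    then obtain K0 where K0: "\<forall>i\<ge>K0. dist (dist (f (xs i)) (xs (Suc i))) 0 < min ds dp"
      using conv unfolding lim_sequentially by blast
    have er: "\<forall>i\<ge>K0. dist (f (xs i)) (xs (Suc i)) \<le> ds" "\<forall>i\<ge>K0. dist (f (xs i)) (xs (Suc i)) \<le> dp"
      using K0 by auto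
    define K where "K = K0 + N"
    obtain y where y: "y \<in> X" "dist ((f^^K) y) (xs K) < r1" using dp(2) xs er(2) unfolding K_def by blast
    have erK: "\<forall>i\<ge>K. dist (f (xs i)) (xs (Suc i)) \<le> ds" using er(1) unfolding K_def by auto
    have ssK: "\<forall>k. dist ((f^^k) (xs K)) (xs (K+k)) \<le> e/2" using ds(2) xs erK by blast
    have "dist ((f^^i) y) (xs i) \<le> e" if i: "i \<ge> K" for i
    proof -
      define k where "k = i - K"
      have ik: "i = K + k" using i unfolding k_def by simp
      have "(f^^i) y = (f^^k) ((f^^K) y)" unfolding ik by (simp only: add.commute[of K] funpow_add o_apply)
      moreover have "dist ((f^^k) ((f^^K) y)) ((f^^k) (xs K)) \<le> e/2"
        using r1(2)[of "(f^^K) y" "xs K" k] fn_in y xs by auto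
      moreover have "dist ((f^^k) (xs K)) (xs i) \<le> e/2" using ssK ik by simp
      ultimately show ?thesis using dist_triangle[of "(f^^k) ((f^^K) y)" "xs i" "(f^^k) (xs K)"] by simp
    qed
    then show ?thesis using y(1) by blast
  qed
  have "\<forall>j. \<exists>K y. y \<in> X \<and> (\<forall>i\<ge>K. dist ((f^^i) y) (xs i) \<le> 1 / (real j + 1))"
  proof
    fix j
    have "1 / (real j + 1) > 0" by simp
    then show "\<exists>K y. y \<in> X \<and> (\<forall>i\<ge>K. dist ((f^^i) y) (xs i) \<le> 1 / (real j + 1))" using CL by blast
  qed
  then obtain Kf yf where Ky: "\<forall>j. yf j \<in> X \<and> (\<forall>i\<ge>Kf j. dist ((f^^i) (yf j)) (xs i) \<le> 1 / (real j + 1))"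
    by metis
  have sc: "seq_compact X" using cX compact_imp_seq_compact by blast
  have yin: "\<forall>j. yf j \<in> X" using Ky by blast
  obtain ys r where r: "ys \<in> X" "strict_mono r" "(yf \<circ> r) \<longlonglongrightarrow> ys" using seq_compactE[OF sc yin] by blast
  have "\<exists>no. \<forall>i\<ge>no. dist (dist (xs i) ((f^^i) ys)) 0 < eta" if eta: "eta > 0" for eta
  proof -
    have e2: "eta/2 > 0" using eta by simp
    obtain dd where dd: "dd > 0" "\<And>x y n. x \<in> X \<Longrightarrow> y \<in> X \<Longrightarrow> dist x y \<le> dd \<Longrightarrow> dist ((f^^n) x) ((f^^n) y) \<le> eta/2"
      using L1[OF e2] by blast
    obtain j0 :: nat where j0: "inverse (real (Suc j0)) < eta/2" using reals_Archimedean[OF e2] by blast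
    obtain M where M: "\<forall>k\<ge>M. dist ((yf \<circ> r) k) ys < dd" using r(3) dd(1) unfolding lim_sequentially by blast
    define k where "k = max M j0"
    define j where "j = r k"
    have "j \<ge> k" using seq_suble[OF r(2)] unfolding j_def by blast
    then have jj: "j \<ge> j0" unfolding k_def by simp
    have "1 / (real j + 1) \<le> 1 / (real j0 + 1)" using jj by (simp add: frac_le)
    then have ej: "1 / (real j + 1) < eta/2" using j0 by (simp add: inverse_eq_divide add.commute)
    have dj: "dist (yf j) ys \<le> dd" using M unfolding j_def k_def by (simp add: less_imp_le)
    have "dist (dist (xs i) ((f^^i) ys)) 0 < eta" if i: "i \<ge> Kf j" for i
    proof -
      have a: "dist ((f^^i) (yf j)) ((f^^i) ys) \<le> eta/2" using dd(2) dj yin r(1) by blast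
      have b: "dist ((f^^i) (yf j)) (xs i) \<le> 1 / (real j + 1)" using Ky i by blast
      have "dist (xs i) ((f^^i) ys) < eta" using a b ej
        dist_triangle[of "xs i" "(f^^i) ys" "(f^^i) (yf j)"] by (simp add: dist_commute)
      then show ?thesis by simp
    qed
    then show ?thesis by blast
  qed
  then have "(\<lambda>i. dist (xs i) ((f^^i) ys)) \<longlonglongrightarrow> 0" unfolding lim_sequentially by blast
  then show "\<exists>y\<in>X. (\<lambda>i. dist (xs i) ((f ^^ i) y)) \<longlonglongrightarrow> 0" using r(1) by blast
qed

end


primrec stp :: "(nat \<Rightarrow> nat) \<Rightarrow> nat \<Rightarrow> nat \<times> nat" where
  "stp m 0 = (0, 0)"
| "stp m (Suc t) = (if snd (stp m t) < m (fst (stp m t)) then (fst (stp m t), Suc (snd (stp m t)))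
                    else (Suc (fst (stp m t)), 0))"

lemma stp_fst_le: "fst (stp m t) \<le> t"
  by (induction t) auto

lemma stp_snd_le: "snd (stp m t) \<le> m (fst (stp m t))"
  by (induction t) auto

lemma stp_fst_Suc: "fst (stp m t) \<le> fst (stp m (Suc t))"
  by auto

lemma stp_mono: "t \<le> t' \<Longrightarrow> fst (stp m t) \<le> fst (stp m t')"
  using lift_Suc_mono_le[of "\<lambda>t. fst (stp m t)", OF stp_fst_Suc] by blast

lemma stp_run: "stp m t = (k, 0) \<Longrightarrow> j \<le> m k \<Longrightarrow> stp m (t + j) = (k, j)"
  by (induction j) auto

lemma stp_reach: "\<exists>t. stp m t = (K, 0)"
proof (induction K)
  case 0 then show ?case by (intro exI[of _ 0]) simp
next
  case (Suc K)
  then obtain t where t: "stp m t = (K, 0)" by blast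
  then have "stp m (t + m K) = (K, m K)" using stp_run by blast
  then have "stp m (Suc (t + m K)) = (Suc K, 0)" by simp
  then show ?case by blast
qed

lemma funpow_split: assumes "k \<le> n" shows "(g^^n) x = (g^^(n-k)) ((g^^k) x)"
proof -
  have "(g^^((n-k)+k)) x = (g^^(n-k)) ((g^^k) x)" by (simp only: funpow_add o_apply)
  then show ?thesis using assms by simp
qed

context eqc begin

lemma ch_loop: assumes "chainr X f g a b"
  shows "\<exists>m c p. c 0 = a \<and> c m = a \<and> p \<le> m \<and> c p = b \<and> (\<forall>j\<le>m. c j \<in> Om) \<and> (\<forall>j<m. Dle f g (c j) (c (Suc j)))"
proof -
  obtain m c where c: "c 0 = a" "c m = b" "\<forall>j\<le>m. c j \<in> Om" "\<forall>j<m. Dle f g (c j) (c (Suc j))"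
    by (rule chainrE[OF assms])
  obtain m2 c2 where c2: "c2 0 = b" "c2 m2 = a" "\<forall>j\<le>m2. c2 j \<in> Om" "\<forall>j<m2. Dle f g (c2 j) (c2 (Suc j))"
    by (rule chainrE[OF ch_sym[OF assms]])
  define c' where "c' j = (if j \<le> m then c j else c2 (j - m))" for j
  have "\<forall>j<m+m2. Dle f g (c' j) (c' (Suc j))"
  proof (intro allI impI)
    fix j assume j: "j < m + m2"
    show "Dle f g (c' j) (c' (Suc j))"
    proof (cases "j < m")
      case True then show ?thesis using c(4) unfolding c'_def by auto
    next
      case False
      then have "Suc j - m = Suc (j - m)" "j - m < m2" using j by auto
      then show ?thesis using c2 c False unfolding c'_def
        by (cases "j = m") auto
    qed
  qed
  moreover have "c' 0 = a" "c' (m+m2) = a" "\<forall>j\<le>m+m2. c' j \<in> Om" "c' m = b" using c c2 unfolding c'_def by auto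
  ultimately show ?thesis by (intro exI[of _ "m+m2"] exI[of _ c'] exI[of _ m]) auto
qed

lemma L_CH: assumes L: "limit_shadowing X f" shows "CH X f"
proof (rule ccontr)
  assume "\<not> CH X f"
  then obtain e where e: "e > 0" "\<forall>g>0. \<exists>x y. chainr X f g x y \<and> dist x y > e"
    unfolding CH_def by (auto simp: not_le)
  have "\<forall>k. \<exists>x y. chainr X f (1 / (real k + 1)) x y \<and> dist x y > e"
  proof
    fix k :: nat
    have "1 / (real k + 1) > 0" by simp
    then show "\<exists>x y. chainr X f (1 / (real k + 1)) x y \<and> dist x y > e" using e(2) by blast
  qed
  then obtain xk yk where xy: "\<forall>k. chainr X f (1 / (real k + 1)) (xk k) (yk k) \<and> dist (xk k) (yk k) > e"
    by metis
  define pk where "pk k = (xk k, yk k)" for k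
  have sc: "seq_compact (Om \<times> Om)" using compact_Times[OF Om_compact Om_compact] compact_imp_seq_compact by blast
  have pin: "\<forall>k. pk k \<in> Om \<times> Om" using xy ch_Om unfolding pk_def by blast
  obtain l r where r: "l \<in> Om \<times> Om" "strict_mono r" "(pk \<circ> r) \<longlonglongrightarrow> l" using seq_compactE[OF sc pin] by blast
  define a where "a = fst l"
  define b where "b = snd l"
  have ab: "a \<in> Om" "b \<in> Om" using r(1) unfolding a_def b_def by auto
  have ca: "(\<lambda>k. xk (r k)) \<longlonglongrightarrow> a" using tendsto_fst[OF r(3)] unfolding a_def pk_def by (simp add: o_def)
  have cb: "(\<lambda>k. yk (r k)) \<longlonglongrightarrow> b" using tendsto_snd[OF r(3)] unfolding b_def pk_def by (simp add: o_def)
  have "(\<lambda>k. dist (xk (r k)) (yk (r k))) \<longlonglongrightarrow> dist a b" using tendsto_dist[OF ca cb] .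
  moreover have "\<forall>k\<ge>0. e \<le> dist (xk (r k)) (yk (r k))" using xy by (simp add: less_imp_le)
  ultimately have dab: "e \<le> dist a b" using LIMSEQ_le_const by blast
  have chab: "chainr X f g a b" if g: "g > 0" for g
  proof -
    obtain dg where dg: "dg > 0" "\<And>x y. x \<in> X \<Longrightarrow> y \<in> X \<Longrightarrow> dist x y \<le> dg \<Longrightarrow> Dle f g x y"
      using L1D[OF g] by blast
    obtain M1 where M1: "\<forall>k\<ge>M1. dist (xk (r k)) a < dg" using ca dg(1) unfolding lim_sequentially by blast
    obtain M2 where M2: "\<forall>k\<ge>M2. dist (yk (r k)) b < dg" using cb dg(1) unfolding lim_sequentially by blast
    obtain j0 :: nat where j0: "inverse (real (Suc j0)) < g" using reals_Archimedean[OF g] by blast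
    define k where "k = max j0 (max M1 M2)"
    have "r k \<ge> k" using seq_suble[OF r(2)] by blast
    then have "r k \<ge> j0" unfolding k_def by simp
    then have "1 / (real (r k) + 1) \<le> 1 / (real j0 + 1)" by (simp add: frac_le)
    then have gk: "1 / (real (r k) + 1) \<le> g" using j0 by (simp add: inverse_eq_divide add.commute)
    have ch1: "chainr X f g (xk (r k)) (yk (r k))" using ch_mono xy gk by blast
    have xyOm: "xk (r k) \<in> Om" "yk (r k) \<in> Om" using ch_Om ch1 by blast+
    have "dist a (xk (r k)) \<le> dg" using M1 unfolding k_def by (simp add: dist_commute less_imp_le)
    then have "Dle f g a (xk (r k))" using dg(2) ab xyOm Om_sub by blast
    then have ch0: "chainr X f g a (xk (r k))" using ch_snoc[OF ch_refl[OF ab(1)] xyOm(1)] by blast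
    have "dist (yk (r k)) b \<le> dg" using M2 unfolding k_def by (simp add: less_imp_le)
    then have "Dle f g (yk (r k)) b" using dg(2) ab xyOm Om_sub by blast
    then show ?thesis using ch_snoc[OF ch_trans[OF ch0 ch1] ab(2)] by blast
  qed
  have "\<forall>k. \<exists>m c p. c 0 = a \<and> c m = a \<and> p \<le> m \<and> c p = b \<and> (\<forall>j\<le>m. c j \<in> Om) \<and>
      (\<forall>j<m. Dle f (1 / (real k + 1)) (c j) (c (Suc j)))"
  proof
    fix k :: nat
    have "1 / (real k + 1) > 0" by simp
    then show "\<exists>m c p. c 0 = a \<and> c m = a \<and> p \<le> m \<and> c p = b \<and> (\<forall>j\<le>m. c j \<in> Om) \<and>
      (\<forall>j<m. Dle f (1 / (real k + 1)) (c j) (c (Suc j)))" using ch_loop[OF chab] by blast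
  qed
  then obtain M C P where MCP: "\<forall>k. C k 0 = a \<and> C k (M k) = a \<and> P k \<le> M k \<and> C k (P k) = b \<and>
      (\<forall>j\<le>M k. C k j \<in> Om) \<and> (\<forall>j<M k. Dle f (1 / (real k + 1)) (C k j) (C k (Suc j)))"
    by metis
  define s where "s t = C (fst (stp M t)) (snd (stp M t))" for t
  define p where "p t = (f^^t) (s t)" for t
  have sOm: "s t \<in> Om" for t using MCP stp_snd_le unfolding s_def by blast
  have pX: "\<forall>t. p t \<in> X" using sOm Om_sub fn_in unfolding p_def by blast
  have err: "dist (f (p t)) (p (Suc t)) \<le> 1 / (real (fst (stp M t)) + 1)" for t
  proof (cases "snd (stp M t) < M (fst (stp M t))")
    case True
    define k where "k = fst (stp M t)"
    define j where "j = snd (stp M t)"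
    have st: "stp M (Suc t) = (k, Suc j)" using True unfolding k_def j_def by simp
    have "Dle f (1 / (real k + 1)) (C k j) (C k (Suc j))" using MCP True unfolding k_def j_def by blast
    then have "dist ((f^^(Suc t)) (C k j)) ((f^^(Suc t)) (C k (Suc j))) \<le> 1 / (real k + 1)" unfolding Dle_def by blast
    moreover have "f (p t) = (f^^(Suc t)) (C k j)" unfolding p_def s_def k_def j_def by simp
    moreover have "p (Suc t) = (f^^(Suc t)) (C k (Suc j))" unfolding p_def s_def using st by simp
    ultimately show ?thesis unfolding k_def by simp
  next
    case False
    define k where "k = fst (stp M t)"
    have jm: "snd (stp M t) = M k" using False stp_snd_le[of M t] unfolding k_def by simp
    have st: "stp M (Suc t) = (Suc k, 0)" using False unfolding k_def by simp
    have "s t = a" unfolding s_def using jm MCP unfolding k_def by simp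
    moreover have "s (Suc t) = a" unfolding s_def using st MCP by simp
    ultimately have "f (p t) = p (Suc t)" unfolding p_def by simp
    then show ?thesis by simp
  qed
  have errc: "(\<lambda>t. dist (f (p t)) (p (Suc t))) \<longlonglongrightarrow> 0"
    unfolding lim_sequentially
  proof (intro allI impI)
    fix eta :: real assume eta: "eta > 0"
    obtain K :: nat where K: "inverse (real (Suc K)) < eta" using reals_Archimedean[OF eta] by blast
    obtain T where T: "stp M T = (K, 0)" using stp_reach by blast
    have "dist (dist (f (p t)) (p (Suc t))) 0 < eta" if t: "t \<ge> T" for t
    proof -
      have "K \<le> fst (stp M t)" using stp_mono[OF t, of M] T by simp
      then have "1 / (real (fst (stp M t)) + 1) \<le> 1 / (real K + 1)" by (simp add: frac_le)
      then have "dist (f (p t)) (p (Suc t)) < eta" using err[of t] K by (simp add: inverse_eq_divide add.commute)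
      then show ?thesis by simp
    qed
    then show "\<exists>no. \<forall>t\<ge>no. dist (dist (f (p t)) (p (Suc t))) 0 < eta" by blast
  qed
  obtain z where z: "z \<in> X" "(\<lambda>t. dist (p t) ((f^^t) z)) \<longlonglongrightarrow> 0"
    using L pX errc unfolding limit_shadowing_def by blast
  define eta where "eta = dist a b / 5"
  have eta: "eta > 0" unfolding eta_def using dab e(1) by (intro divide_pos_pos) linarith+
  obtain dd where dd: "dd > 0" "\<And>x y n. x \<in> X \<Longrightarrow> y \<in> X \<Longrightarrow> dist x y \<le> dd \<Longrightarrow> dist ((f^^n) x) ((f^^n) y) \<le> eta"
    using L1[OF eta] by blast
  obtain T0 where T0: "\<forall>t\<ge>T0. dist (dist (p t) ((f^^t) z)) 0 < dd" using z(2) dd(1) unfolding lim_sequentially by blast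
  obtain t1 where t1: "stp M t1 = (T0, 0)" using stp_reach by blast
  have t1T: "t1 \<ge> T0" using stp_fst_le[of M t1] t1 by simp
  define t2 where "t2 = t1 + P T0"
  have t2s: "stp M t2 = (T0, P T0)" unfolding t2_def using stp_run[OF t1] MCP by blast
  have t2T: "t2 \<ge> T0" using t1T unfolding t2_def by simp
  have sa: "s t1 = a" unfolding s_def using t1 MCP by simp
  have sb: "s t2 = b" unfolding s_def using t2s MCP by simp
  have aX: "a \<in> X" "b \<in> X" using ab Om_sub by auto
  have "dist (p t1) ((f^^t1) z) < dd" using T0 t1T by simp
  then have da: "dist ((f^^t1) a) ((f^^t1) z) \<le> dd" using sa unfolding p_def by simp
  have "dist (p t2) ((f^^t2) z) < dd" using T0 t2T by simp
  then have db: "dist ((f^^t2) b) ((f^^t2) z) \<le> dd" using sb unfolding p_def by simp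
  obtain n where n: "n \<ge> t1 + t2" "dist ((f^^n) a) a < eta" "dist ((f^^n) b) b < eta"
    using JR[OF ab eta] by blast
  have ea: "(f^^n) a = (f^^(n - t1)) ((f^^t1) a)" "(f^^n) z = (f^^(n - t1)) ((f^^t1) z)"
    using n(1) funpow_split[of t1 n] by simp_all
  have eb: "(f^^n) b = (f^^(n - t2)) ((f^^t2) b)" "(f^^n) z = (f^^(n - t2)) ((f^^t2) z)"
    using n(1) funpow_split[of t2 n] by simp_all
  have az: "dist ((f^^n) a) ((f^^n) z) \<le> eta" using dd(2)[OF fn_in[OF aX(1)] fn_in[OF z(1)] da] ea by simp
  have bz: "dist ((f^^n) b) ((f^^n) z) \<le> eta" using dd(2)[OF fn_in[OF aX(2)] fn_in[OF z(1)] db] eb by simp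
  have "dist a b \<le> dist a ((f^^n) a) + dist ((f^^n) a) ((f^^n) z) + dist ((f^^n) z) ((f^^n) b) + dist ((f^^n) b) b"
    using dist_triangle[of a b "(f^^n) a"] dist_triangle[of "(f^^n) a" b "(f^^n) z"] dist_triangle[of "(f^^n) z" b "(f^^n) b"]
    by linarith
  moreover have "dist a ((f^^n) a) < eta" using n(2) by (simp add: dist_commute)
  moreover have "dist ((f^^n) z) ((f^^n) b) \<le> eta" using bz by (simp add: dist_commute)
  ultimately have "dist a b < 5 * eta" using az n(3) eta by linarith
  then show False unfolding eta_def by simp
qed

end


theorem theorem1p2:
  fixes X :: "'a::metric_space set" and f :: "'a \<Rightarrow> 'a"
  assumes "compact X" and "X \<noteq> {}" and "f ` X \<subseteq> X"
    and "equicontinuous_on X f"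
  shows "(limit_shadowing X f \<longleftrightarrow> shadowing X f)
       \<and> (shadowing X f \<longleftrightarrow> zero_dimensional (nonwandering X f))
       \<and> (shadowing X f \<longleftrightarrow> totally_disconnected (nonwandering X f))"
proof -
  interpret eqc X f using assms by unfold_locales
  have SL: "shadowing X f \<Longrightarrow> limit_shadowing X f" using S_CH CH_SS SS_L by blast
  have LS: "limit_shadowing X f \<Longrightarrow> shadowing X f" using L_CH CH_SS SS_S by blast
  have SZ: "shadowing X f \<Longrightarrow> zero_dimensional (nonwandering X f)" using S_CH CH_Z by blast
  have ZS: "zero_dimensional (nonwandering X f) \<Longrightarrow> shadowing X f" using Z_CH CH_SS SS_S by blast
  have ZT: "zero_dimensional (nonwandering X f) \<Longrightarrow> totally_disconnected (nonwandering X f)" using Z_T by blast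
  have TZ: "totally_disconnected (nonwandering X f) \<Longrightarrow> zero_dimensional (nonwandering X f)" using T_Z by blast
  show ?thesis using SL LS SZ ZS ZT TZ by blast
qed

end
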